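(* Let $p(y)=\prod_{j=1}^n(y+\theta_j)$ be a real polynomial with $0\le\theta_j\le1$ for all $j$. Then the bivariate polynomial $p\big(y-xy(y+1)\big)=\sum_{k=0}^{n}p^{(k)}(y)\frac{(-xy(y+1))^k}{k!}$ is stable.
   Context: A polynomial $P\in\mathbb{C}[x,y]$ is stable if $P(x,y)\neq0$ whenever $\operatorname{Im}x>0$ and $\operatorname{Im}y>0$. *)

theory Defs
  imports Complex_Main "HOL-Computational_Algebra.Polynomial"
begin

definition stable2 :: "(complex \<Rightarrow> complex \<Rightarrow> complex) \<Rightarrow> bool" where
  "stable2 P \<longleftrightarrow> (\<forall>x y. Im x > 0 \<longrightarrow> Im y > 0 \<longrightarrow> P x y \<noteq> 0)"

end

theory Submission
  imports Defs
begin

lemma map_of_real_mult: "map_poly complex_of_real (a*b) = map_poly of_real a * map_poly of_real b"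
  by (rule poly_eqI) (simp add: coeff_map_poly coeff_mult)

lemma L: "finite A \<Longrightarrow> poly (map_poly complex_of_real (\<Prod>j\<in>A. [:\<theta> j, 1:])) z = (\<Prod>j\<in>A. z + of_real (\<theta> j))"
proof (induction A rule: finite_induct)
  case empty thus ?case by simp
next
  case (insert a A)
  have "poly (map_poly complex_of_real (\<Prod>j\<in>insert a A. [:\<theta> j, 1:])) z
     = poly (map_poly complex_of_real [:\<theta> a, 1:]) z * poly (map_poly complex_of_real (\<Prod>j\<in>A. [:\<theta> j, 1:])) z"
    by (simp only: prod.insert[OF insert(1,2)] map_of_real_mult poly_mult)
  thus ?case using insert by (simp add: map_poly_pCons)
qed

lemma Im_inv_neg: "Im (y::complex) > 0 \<Longrightarrow> Im (1 / y) < 0"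
  proof -
  assume a: "Im y > 0"
  have "0 < Re y * Re y + Im y * Im y" using a by (smt (verit) mult_pos_pos zero_le_square)
  thus ?thesis using a by (simp add: Im_divide power2_eq_square)
qed
  
lemma factor_nz:
  fixes x y :: complex and t :: real
  assumes "Im x > 0" "Im y > 0" "0 \<le> t" "t \<le> 1"
  shows "y - x * y * (y + 1) + of_real t \<noteq> 0"
proof
  assume h: "y - x * y * (y + 1) + of_real t = 0"
  have y0: "y \<noteq> 0" using assms(2) by auto
  have y1: "y + 1 \<noteq> 0" proof
    assume "y + 1 = 0" hence "Im (y+1) = 0" by simp
    thus False using assms(2) by simp
  qed
  have e: "x * (y * (y+1)) = y + of_real t" using h by (simp add: algebra_simps)
  have "y * (y+1) \<noteq> 0" using y0 y1 by simp
  hence "x = (y + of_real t) / (y * (y+1))" using e by (simp add: eq_divide_eq)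
  also have "\<dots> = of_real t * (1/y) + of_real (1 - t) * (1/(y+1))" using y0 y1 by (simp add: field_simps)
  finally have xe: "x = of_real t * (1/y) + of_real (1 - t) * (1/(y+1))" .
  have im: "\<And>r z. Im (complex_of_real r * z) = r * Im z" by simp
  have "Im x = t * Im (1/y) + (1 - t) * Im (1/(y+1))"
    by (subst xe, simp only: plus_complex.sel im)
  moreover have "Im (1/y) < 0" using Im_inv_neg assms(2) by blast
  moreover have "Im (1/(y+1)) < 0" using Im_inv_neg[of "y+1"] assms(2) by simp
  moreover have "\<And>a b::real. a < 0 \<Longrightarrow> b < 0 \<Longrightarrow> t * a + (1 - t) * b < 0"
  proof -
    fix a b :: real assume ab: "a < 0" "b < 0"
    have "t * a \<le> t * 0" using ab assms(3) by (intro mult_left_mono) auto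
    moreover have "(1-t) * b \<le> (1-t) * 0" using ab assms(4) by (intro mult_left_mono) auto
    moreover have "t * a < 0 \<or> (1-t) * b < 0"
      using ab assms(3,4) by (cases "t = 0") (auto simp: mult_pos_neg)
    ultimately show "t * a + (1 - t) * b < 0" by linarith
  qed
  ultimately have "Im x < 0" by simp
  thus False using assms(1) by simp
qed

theorem mainTheorem6:
  fixes n :: nat and \<theta> :: "nat \<Rightarrow> real" and p :: "real poly"
  assumes "\<forall>j\<in>{1..n}. 0 \<le> \<theta> j \<and> \<theta> j \<le> 1"
    and "p = (\<Prod>j=1..n. [:\<theta> j, 1:])"
  shows "stable2 (\<lambda>x y. poly (map_poly complex_of_real p) (y - x * y * (y + 1)))"
  unfolding stable2_def
proof (intro allI impI)
  fix x y :: complex assume "Im x > 0" "Im y > 0"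
  thus "poly (map_poly complex_of_real p) (y - x * y * (y + 1)) \<noteq> 0"
    using assms factor_nz by (simp add: L)
qed

end
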